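(* Let $G=(B\cup W,E)$ be a bipartite graph (an instance of Bipartite Influence), and let $B_0\subseteq B$ and $W_0\subseteq W$. Then $Ls(G)\leq Ls(G\setminus W_0)+|W_0|$, $Rs(G)\geq Rs(G\setminus B_0)-|B_0|$, $Ls(G)\geq Ls(G\setminus B_0)-|B_0|$, and $Rs(G)\leq Rs(G\setminus W_0)+|W_0|$.
   Context: Bipartite Influence is a two-player game (Left and Right) played on a bipartite graph $G=(B\cup W,E)$ whose vertices in $B$ are black and in $W$ white, every edge joining $B$ and $W$. Isolated vertices are credited to the owner of their colour (black to Left, white to Right) and removed. On her turn Left chooses a black vertex $x$ and removes $Rmv(G,x)$, consisting of $x$, its neighbours, and the vertices that become isolated after removing these; Right does the same with a white vertex. The score is (number of vertices credited to/removed by Left) minus (number credited to/removed by Right). Formally, if $G$ has no edges its value is $|B|-|W|$; otherwise $Ls(G)=\max_{x\in B\text{ non-isolated}}\{|Rmv(G,x)|+Rs(G\setminus Rmv(G,x))\}$ and $Rs(G)=\min_{y\in W\text{ non-isolated}}\{-|Rmv(G,y)|+Ls(G\setminus Rmv(G,y))\}$, where isolated vertices of $G$ contribute $|I_B|-|I_W|$ (black minus white isolated vertices) to both scores. $Ls$ (resp. $Rs$) is the optimal final score when Left (resp. Right) moves first. $G\setminus X$ denotes the subgraph induced on the remaining vertices. *)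

theory Defs
  imports Main
begin

definition bipartite :: "'a set \<Rightarrow> 'a set \<Rightarrow> ('a \<times> 'a) set \<Rightarrow> bool" where
  "bipartite B W E \<longleftrightarrow> finite B \<and> finite W \<and> B \<inter> W = {} \<and> E \<subseteq> B \<times> W"

definition nbrs :: "('a \<times> 'a) set \<Rightarrow> 'a \<Rightarrow> 'a set" where
  "nbrs E v = {u. (v, u) \<in> E \<or> (u, v) \<in> E}"

definition isol :: "'a set \<Rightarrow> 'a set \<Rightarrow> ('a \<times> 'a) set \<Rightarrow> 'a set" where
  "isol B W E = {v \<in> B \<union> W. nbrs E v = {}}"

definition del :: "'a set \<Rightarrow> 'a set \<Rightarrow> ('a \<times> 'a) set \<Rightarrow> 'a set
    \<Rightarrow> 'a set \<times> 'a set \<times> ('a \<times> 'a) set" where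
  "del B W E X = (B - X, W - X, E \<inter> ((B - X) \<times> (W - X)))"

definition Rmv :: "'a set \<Rightarrow> 'a set \<Rightarrow> ('a \<times> 'a) set \<Rightarrow> 'a \<Rightarrow> 'a set" where
  "Rmv B W E x =
     (let N = ({x} \<union> nbrs E x) \<inter> (B \<union> W) in
      case del B W E N of (B1, W1, E1) \<Rightarrow> N \<union> isol B1 W1 E1)"

lemma Rmv_contains: "x \<in> B \<union> W \<Longrightarrow> x \<in> Rmv B W E x"
  by (auto simp: Rmv_def Let_def split: prod.splits)

lemma Rmv_sub: "Rmv B W E x \<subseteq> B \<union> W"
  by (auto simp: Rmv_def Let_def del_def isol_def split: prod.splits)

text \<open>score True G = Ls(G) (Left moves first), score False G = Rs(G) (Right moves
  first).\<close>
function score :: "bool \<Rightarrow> 'a set \<Rightarrow> 'a set \<Rightarrow> ('a \<times> 'a) set \<Rightarrow> int" where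
  "score L B W E =
    (if \<not> finite (B \<union> W) then 0
     else if E = {} then int (card B) - int (card W)
     else
       (let I = isol B W E; B' = B - I; W' = W - I; E' = E \<inter> (B' \<times> W') in
        int (card (I \<inter> B)) - int (card (I \<inter> W)) +
        (if L then
           Max ((\<lambda>x. int (card (Rmv B' W' E' x)) +
                  score False (B' - Rmv B' W' E' x) (W' - Rmv B' W' E' x)
                    (E' \<inter> ((B' - Rmv B' W' E' x) \<times> (W' - Rmv B' W' E' x)))) ` B')
         else
           Min ((\<lambda>y. - int (card (Rmv B' W' E' y)) +
                  score True (B' - Rmv B' W' E' y) (W' - Rmv B' W' E' y)
                    (E' \<inter> ((B' - Rmv B' W' E' y) \<times> (W' - Rmv B' W' E' y)))) ` W'))))"
  by pat_completeness auto
termination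
proof (relation "measure (\<lambda>(L, B, W, E). card (B \<union> W))")
  show "wf (measure (\<lambda>(L, B, W, E). card (B \<union> W)))" by simp
next
  fix L :: bool and B W :: "'a set" and E :: "('a \<times> 'a) set" and I B' W' E' x
  assume fin: "\<not> \<not> finite (B \<union> W)" and "E \<noteq> {}" and I: "I = isol B W E"
    and B': "B' = B - I" and W': "W' = W - I" and "E' = E \<inter> (B' \<times> W')" and L and x: "x \<in> B'"
  let ?R = "Rmv B' W' E' x"
  have "x \<in> ?R" using x by (intro Rmv_contains) auto
  hence "(B' - ?R) \<union> (W' - ?R) \<subset> B \<union> W" using x B' W' by blast
  thus "((False, B' - ?R, W' - ?R, E' \<inter> ((B' - ?R) \<times> (W' - ?R))), L, B, W, E)
        \<in> measure (\<lambda>(L, B, W, E). card (B \<union> W))"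
    using fin by (simp add: psubset_card_mono)
next
  fix L :: bool and B W :: "'a set" and E :: "('a \<times> 'a) set" and I B' W' E' x
  assume fin: "\<not> \<not> finite (B \<union> W)" and "E \<noteq> {}" and I: "I = isol B W E"
    and B': "B' = B - I" and W': "W' = W - I" and "E' = E \<inter> (B' \<times> W')" and "\<not> L" and x: "x \<in> W'"
  let ?R = "Rmv B' W' E' x"
  have "x \<in> ?R" using x by (intro Rmv_contains) auto
  hence "(B' - ?R) \<union> (W' - ?R) \<subset> B \<union> W" using x B' W' by blast
  thus "((True, B' - ?R, W' - ?R, E' \<inter> ((B' - ?R) \<times> (W' - ?R))), L, B, W, E)
        \<in> measure (\<lambda>(L, B, W, E). card (B \<union> W))"
    using fin by (simp add: psubset_card_mono)
qed

definition Ls :: "'a set \<Rightarrow> 'a set \<Rightarrow> ('a \<times> 'a) set \<Rightarrow> int" where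
  "Ls B W E = score True B W E"

definition Rs :: "'a set \<Rightarrow> 'a set \<Rightarrow> ('a \<times> 'a) set \<Rightarrow> int" where
  "Rs B W E = score False B W E"

end

theory Submission imports Defs begin

definition nb :: "('a \<times> 'a) set \<Rightarrow> 'a set \<Rightarrow> 'a \<Rightarrow> 'a set" where
  "nb E V v = {u \<in> V. (v, u) \<in> E \<or> (u, v) \<in> E}"
definition iso :: "('a \<times> 'a) set \<Rightarrow> 'a set \<Rightarrow> 'a set" where
  "iso E V = {v \<in> V. nb E V v = {}}"
definition core :: "('a \<times> 'a) set \<Rightarrow> 'a set \<Rightarrow> 'a set" where
  "core E V = V - iso E V"
definition nbh :: "('a \<times> 'a) set \<Rightarrow> 'a set \<Rightarrow> 'a \<Rightarrow> 'a set" where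
  "nbh E V x = insert x (nb E V x) \<inter> V"
definition aft :: "('a \<times> 'a) set \<Rightarrow> 'a set \<Rightarrow> 'a \<Rightarrow> 'a set" where
  "aft E V x = core E (V - nbh E V x)"
definition sc :: "'a set \<Rightarrow> 'a set \<Rightarrow> ('a \<times> 'a) set \<Rightarrow> bool \<Rightarrow> 'a set \<Rightarrow> int" where
  "sc B W E L V = score L (B \<inter> V) (W \<inter> V) (E \<inter> (V \<times> V))"
definition cnt :: "'a set \<Rightarrow> 'a set \<Rightarrow> 'a set \<Rightarrow> int" where
  "cnt B W J = int (card (B \<inter> J)) - int (card (W \<inter> J))"

declare score.simps[simp del]

lemma aft_sub: "aft E U x \<subseteq> U"
  by (auto simp: aft_def core_def)

lemma sc_unfold:
  assumes bip: "bipartite B W E" and VS: "V \<subseteq> B \<union> W"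
  shows "sc B W E L V = (if E \<inter> (V \<times> V) = {} then cnt B W V
     else cnt B W (iso E V) +
       (if L then Max ((\<lambda>x. int (card (core E V - aft E (core E V) x)) + sc B W E False (aft E (core E V) x)) ` (B \<inter> core E V))
        else Min ((\<lambda>y. - int (card (core E V - aft E (core E V) y)) + sc B W E True (aft E (core E V) y)) ` (W \<inter> core E V))))"
proof -
  have EBW: "E \<subseteq> B \<times> W" and fin: "finite B" "finite W" and disj: "B \<inter> W = {}"
    using bip by (auto simp: bipartite_def)
  have IS: "\<And>U. U \<subseteq> B \<union> W \<Longrightarrow> isol (B \<inter> U) (W \<inter> U) (E \<inter> (U \<times> U)) = iso E U"
    by (auto simp: isol_def iso_def nbrs_def nb_def)
  define V' where "V' = core E V"
  have V'S: "V' \<subseteq> V" by (auto simp: V'_def core_def)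
  have B': "B \<inter> V - iso E V = B \<inter> V'" and W': "W \<inter> V - iso E V = W \<inter> V'"
    by (auto simp: V'_def core_def)
  have E': "E \<inter> (V \<times> V) \<inter> ((B \<inter> V') \<times> (W \<inter> V')) = E \<inter> (V' \<times> V')"
    using EBW V'S by auto
  have RM: "Rmv (B \<inter> V') (W \<inter> V') (E \<inter> (V' \<times> V')) x = V' - aft E V' x" if "x \<in> V'" for x
  proof -
    have N: "({x} \<union> nbrs (E \<inter> (V' \<times> V')) x) \<inter> (B \<inter> V' \<union> W \<inter> V') = nbh E V' x"
      using that V'S VS by (auto simp: nbrs_def nbh_def nb_def)
    have D: "del (B \<inter> V') (W \<inter> V') (E \<inter> (V' \<times> V')) (nbh E V' x)
       = (B \<inter> (V' - nbh E V' x), W \<inter> (V' - nbh E V' x), E \<inter> ((V' - nbh E V' x) \<times> (V' - nbh E V' x)))"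
      using EBW by (auto simp: del_def)
    have "isol (B \<inter> (V' - nbh E V' x)) (W \<inter> (V' - nbh E V' x)) (E \<inter> ((V' - nbh E V' x) \<times> (V' - nbh E V' x)))
       = iso E (V' - nbh E V' x)"
      using V'S VS by (intro IS) auto
    moreover have "nbh E V' x \<subseteq> V'" by (auto simp: nbh_def)
    ultimately show ?thesis
      unfolding Rmv_def Let_def N D by (auto simp: aft_def core_def iso_def)
  qed
  have REC: "score L' (B \<inter> V' - R) (W \<inter> V' - R) (E \<inter> (V' \<times> V') \<inter> ((B \<inter> V' - R) \<times> (W \<inter> V' - R)))
     = sc B W E L' (V' - R)" for L' R
  proof -
    have "E \<inter> (V' \<times> V') \<inter> ((B \<inter> V' - R) \<times> (W \<inter> V' - R)) = E \<inter> ((V' - R) \<times> (V' - R))"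
      using EBW by auto
    moreover have "B \<inter> V' - R = B \<inter> (V' - R)" "W \<inter> V' - R = W \<inter> (V' - R)" by auto
    ultimately show ?thesis by (simp add: sc_def)
  qed
  have AF: "V' - (V' - aft E V' x) = aft E V' x" for x using aft_sub[of E V' x] by auto
  have finV: "finite (B \<inter> V \<union> W \<inter> V)" using fin by auto
  have E0: "E \<inter> ((B \<inter> V) \<times> (W \<inter> V)) = E \<inter> (V \<times> V)" using EBW by auto
  have cI: "cnt B W (iso E V) = int (card (iso E V \<inter> B)) - int (card (iso E V \<inter> W))"
    by (simp add: cnt_def Int_commute)
  have cV: "cnt B W V = int (card (B \<inter> V)) - int (card (W \<inter> V))" by (simp add: cnt_def)
  have imL: "(\<lambda>x. int (card (Rmv (B \<inter> V') (W \<inter> V') (E \<inter> (V' \<times> V')) x)) +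
      score False (B \<inter> V' - Rmv (B \<inter> V') (W \<inter> V') (E \<inter> (V' \<times> V')) x) (W \<inter> V' - Rmv (B \<inter> V') (W \<inter> V') (E \<inter> (V' \<times> V')) x)
        (E \<inter> (V' \<times> V') \<inter> ((B \<inter> V' - Rmv (B \<inter> V') (W \<inter> V') (E \<inter> (V' \<times> V')) x) \<times> (W \<inter> V' - Rmv (B \<inter> V') (W \<inter> V') (E \<inter> (V' \<times> V')) x)))) ` (B \<inter> V')
     = (\<lambda>x. int (card (V' - aft E V' x)) + sc B W E False (aft E V' x)) ` (B \<inter> V')"
    by (rule image_cong[OF refl]) (simp add: RM REC AF)
  have imR: "(\<lambda>x. - int (card (Rmv (B \<inter> V') (W \<inter> V') (E \<inter> (V' \<times> V')) x)) +
      score True (B \<inter> V' - Rmv (B \<inter> V') (W \<inter> V') (E \<inter> (V' \<times> V')) x) (W \<inter> V' - Rmv (B \<inter> V') (W \<inter> V') (E \<inter> (V' \<times> V')) x)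
        (E \<inter> (V' \<times> V') \<inter> ((B \<inter> V' - Rmv (B \<inter> V') (W \<inter> V') (E \<inter> (V' \<times> V')) x) \<times> (W \<inter> V' - Rmv (B \<inter> V') (W \<inter> V') (E \<inter> (V' \<times> V')) x)))) ` (W \<inter> V')
     = (\<lambda>x. - int (card (V' - aft E V' x)) + sc B W E True (aft E V' x)) ` (W \<inter> V')"
    by (rule image_cong[OF refl]) (simp add: RM REC AF)
  have cI2: "int (card (iso E V \<inter> (B \<inter> V))) - int (card (iso E V \<inter> (W \<inter> V))) = cnt B W (iso E V)"
  proof -
    have "iso E V \<subseteq> V" by (auto simp: iso_def)
    then have "iso E V \<inter> (B \<inter> V) = B \<inter> iso E V" "iso E V \<inter> (W \<inter> V) = W \<inter> iso E V" by auto
    then show ?thesis by (simp add: cnt_def)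
  qed
  have "sc B W E L V = (if E \<inter> (V \<times> V) = {} then cnt B W V
     else cnt B W (iso E V) +
       (if L then Max ((\<lambda>x. int (card (V' - aft E V' x)) + sc B W E False (aft E V' x)) ` (B \<inter> V'))
        else Min ((\<lambda>y. - int (card (V' - aft E V' y)) + sc B W E True (aft E V' y)) ` (W \<inter> V'))))"
    unfolding sc_def[of B W E L V]
    apply (subst score.simps)
    apply (simp only: Let_def E0 IS[OF VS] B' W' E' imL imR finV cV cI2 not_True_eq_False if_False)
    done
  then show ?thesis by (simp add: V'_def)
qed

lemma iso_sub: "iso E V \<subseteq> V" by (auto simp: iso_def)
lemma core_sub: "core E V \<subseteq> V" by (auto simp: core_def)

lemma iso_diff: assumes "J \<subseteq> iso E V" shows "iso E (V - J) = iso E V - J"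
proof -
  have "nb E (V - J) v = nb E V v" if "v \<in> V - J" for v
  proof -
    have "u \<notin> J" if "u \<in> nb E V v" for u
    proof
      assume "u \<in> J"
      then have "nb E V u = {}" using assms by (auto simp: iso_def)
      moreover have "v \<in> nb E V u" using \<open>u \<in> nb E V v\<close> \<open>v \<in> V - J\<close> by (auto simp: nb_def)
      ultimately show False by auto
    qed
    then show ?thesis by (auto simp: nb_def)
  qed
  then show ?thesis using assms by (auto simp: iso_def)
qed

lemma core_diff: assumes "J \<subseteq> iso E V" shows "core E (V - J) = core E V"
  using iso_diff[OF assms] assms by (auto simp: core_def)

lemma iso_mono: "iso E V - X \<subseteq> iso E (V - X)"
  by (auto simp: iso_def nb_def)

lemma core_core: "core E (core E U - X) = core E (U - X)"
proof -
  have "core E U - X = (U - X) - (iso E U - X)" by (auto simp: core_def)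
  moreover have "iso E U - X \<subseteq> iso E (U - X)" by (rule iso_mono)
  ultimately show ?thesis by (simp add: core_diff)
qed

lemma iso_core: "iso E (core E V) = {}"
  unfolding core_def by (simp add: iso_diff)

lemma cnt_split:
  assumes bip: "bipartite B W E" and "J \<subseteq> V"
  shows "cnt B W V = cnt B W J + cnt B W (V - J)"
proof -
  have fin: "finite B" "finite W" using bip by (auto simp: bipartite_def)
  have "card (B \<inter> V) = card (B \<inter> J) + card (B \<inter> (V - J))"
    using fin assms(2) by (subst card_Un_disjoint[symmetric]) (auto intro: arg_cong[where f=card])
  moreover have "card (W \<inter> V) = card (W \<inter> J) + card (W \<inter> (V - J))"
    using fin assms(2) by (subst card_Un_disjoint[symmetric]) (auto intro: arg_cong[where f=card])
  ultimately show ?thesis by (simp add: cnt_def)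
qed

lemma sc_empty: assumes "bipartite B W E" shows "sc B W E L {} = 0"
  using sc_unfold[OF assms, of "{}"] by (simp add: cnt_def)

lemma sc_split:
  assumes bip: "bipartite B W E" and VS: "V \<subseteq> B \<union> W" and J: "J \<subseteq> iso E V"
  shows "sc B W E L V = cnt B W J + sc B W E L (V - J)"
proof -
  have JV: "J \<subseteq> V" using J iso_sub[of E V] by (rule subset_trans)
  have ed: "E \<inter> ((V - J) \<times> (V - J)) = E \<inter> (V \<times> V)"
  proof -
    have "a \<notin> J \<and> b \<notin> J" if "(a, b) \<in> E" "a \<in> V" "b \<in> V" for a b
      using J that by (auto simp: iso_def nb_def)
    then show ?thesis by auto
  qed
  have i2: "iso E (V - J) = iso E V - J" by (rule iso_diff[OF J])
  have c2: "core E (V - J) = core E V" by (rule core_diff[OF J])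
  have s1: "cnt B W V = cnt B W J + cnt B W (V - J)" by (rule cnt_split[OF bip JV])
  have s2: "cnt B W (iso E V) = cnt B W J + cnt B W (iso E V - J)" by (rule cnt_split[OF bip J])
  have VS2: "V - J \<subseteq> B \<union> W" using VS by auto
  note u1 = sc_unfold[OF bip VS, of L]
  note u2 = sc_unfold[OF bip VS2, of L, unfolded ed i2 c2]
  show ?thesis
  proof (cases "E \<inter> (V \<times> V) = {}")
    case True
    then show ?thesis using u1 u2 s1 by simp
  next
    case False
    then have "sc B W E L V = cnt B W (iso E V) + (if L then Max ((\<lambda>x. int (card (core E V - aft E (core E V) x)) + sc B W E False (aft E (core E V) x)) ` (B \<inter> core E V))
        else Min ((\<lambda>y. - int (card (core E V - aft E (core E V) y)) + sc B W E True (aft E (core E V) y)) ` (W \<inter> core E V)))"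
      "sc B W E L (V - J) = cnt B W (iso E V - J) + (if L then Max ((\<lambda>x. int (card (core E V - aft E (core E V) x)) + sc B W E False (aft E (core E V) x)) ` (B \<inter> core E V))
        else Min ((\<lambda>y. - int (card (core E V - aft E (core E V) y)) + sc B W E True (aft E (core E V) y)) ` (W \<inter> core E V)))"
      using u1 u2 by (simp_all only: if_False)
    then show ?thesis using s2 by linarith
  qed
qed

lemma noiso_edge:
  assumes bip: "bipartite B W E" and VS: "V \<subseteq> B \<union> W" and I: "iso E V = {}" and ne: "V \<noteq> {}"
  shows "E \<inter> (V \<times> V) \<noteq> {}" "B \<inter> V \<noteq> {}" "W \<inter> V \<noteq> {}"
proof -
  obtain v where v: "v \<in> V" using ne by auto
  then obtain u where "u \<in> nb E V v" using I by (auto simp: iso_def)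
  then have e: "(v, u) \<in> E \<or> (u, v) \<in> E" "u \<in> V" by (auto simp: nb_def)
  have EBW: "E \<subseteq> B \<times> W" using bip by (auto simp: bipartite_def)
  from e v EBW show "E \<inter> (V \<times> V) \<noteq> {}" "B \<inter> V \<noteq> {}" "W \<inter> V \<noteq> {}" by auto
qed

lemma core_noiso: "iso E V = {} \<Longrightarrow> core E V = V" by (simp add: core_def)

lemma finV: "bipartite B W E \<Longrightarrow> V \<subseteq> B \<union> W \<Longrightarrow> finite V"
  by (auto simp: bipartite_def intro: finite_subset)

lemma scT_ge:
  assumes bip: "bipartite B W E" and VS: "V \<subseteq> B \<union> W" and I: "iso E V = {}" and x: "x \<in> B \<inter> V"
  shows "int (card (V - aft E V x)) + sc B W E False (aft E V x) \<le> sc B W E True V"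
proof -
  have "E \<inter> (V \<times> V) \<noteq> {}" using noiso_edge[OF bip VS I] x by auto
  then have "sc B W E True V = Max ((\<lambda>x. int (card (V - aft E V x)) + sc B W E False (aft E V x)) ` (B \<inter> V))"
    using sc_unfold[OF bip VS, of True] I by (simp add: core_noiso cnt_def)
  moreover have "finite (B \<inter> V)" using finV[OF bip VS] by auto
  ultimately show ?thesis using x by simp
qed

lemma scT_eq:
  assumes bip: "bipartite B W E" and VS: "V \<subseteq> B \<union> W" and I: "iso E V = {}" and ne: "V \<noteq> {}"
  shows "\<exists>x \<in> B \<inter> V. sc B W E True V = int (card (V - aft E V x)) + sc B W E False (aft E V x)"
proof -
  have "E \<inter> (V \<times> V) \<noteq> {}" "B \<inter> V \<noteq> {}" using noiso_edge[OF bip VS I ne] by auto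
  then have "sc B W E True V = Max ((\<lambda>x. int (card (V - aft E V x)) + sc B W E False (aft E V x)) ` (B \<inter> V))"
    using sc_unfold[OF bip VS, of True] I by (simp add: core_noiso cnt_def)
  moreover have "finite (B \<inter> V)" using finV[OF bip VS] by auto
  ultimately show ?thesis using \<open>B \<inter> V \<noteq> {}\<close>
    by (metis (no_types, lifting) Max_in finite_imageI image_iff image_is_empty)
qed

lemma scF_le:
  assumes bip: "bipartite B W E" and VS: "V \<subseteq> B \<union> W" and I: "iso E V = {}" and x: "x \<in> W \<inter> V"
  shows "sc B W E False V \<le> - int (card (V - aft E V x)) + sc B W E True (aft E V x)"
proof -
  have "E \<inter> (V \<times> V) \<noteq> {}" using noiso_edge[OF bip VS I] x by auto
  then have "sc B W E False V = Min ((\<lambda>x. - int (card (V - aft E V x)) + sc B W E True (aft E V x)) ` (W \<inter> V))"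
    using sc_unfold[OF bip VS, of False] I by (simp add: core_noiso cnt_def)
  moreover have "finite (W \<inter> V)" using finV[OF bip VS] by auto
  ultimately show ?thesis using x by simp
qed

lemma scF_eq:
  assumes bip: "bipartite B W E" and VS: "V \<subseteq> B \<union> W" and I: "iso E V = {}" and ne: "V \<noteq> {}"
  shows "\<exists>x \<in> W \<inter> V. sc B W E False V = - int (card (V - aft E V x)) + sc B W E True (aft E V x)"
proof -
  have "E \<inter> (V \<times> V) \<noteq> {}" "W \<inter> V \<noteq> {}" using noiso_edge[OF bip VS I ne] by auto
  then have "sc B W E False V = Min ((\<lambda>x. - int (card (V - aft E V x)) + sc B W E True (aft E V x)) ` (W \<inter> V))"
    using sc_unfold[OF bip VS, of False] I by (simp add: core_noiso cnt_def)
  moreover have "finite (W \<inter> V)" using finV[OF bip VS] by auto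
  ultimately show ?thesis using \<open>W \<inter> V \<noteq> {}\<close>
    by (metis (no_types, lifting) Min_in finite_imageI image_iff image_is_empty)
qed

lemma x_notin_aft: "x \<in> V \<Longrightarrow> x \<notin> aft E V x"
  by (auto simp: aft_def core_def nbh_def)

lemma sc_le_card:
  assumes bip: "bipartite B W E" and VS: "V \<subseteq> B \<union> W"
  shows "sc B W E L V \<le> int (card V)"
  using VS
proof (induction "card V" arbitrary: V L rule: less_induct)
  case less
  have finV0: "finite V" using finV[OF bip less.prems] .
  define V' where "V' = core E V"
  have V'V: "V' \<subseteq> V" by (simp add: V'_def core_sub)
  have V'S: "V' \<subseteq> B \<union> W" using V'V less.prems by auto
  have sp: "sc B W E L V = cnt B W (iso E V) + sc B W E L V'"
    using sc_split[OF bip less.prems, of "iso E V" L] by (simp add: V'_def core_def)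
  have c1: "cnt B W (iso E V) \<le> int (card (iso E V))"
  proof -
    have "card (B \<inter> iso E V) \<le> card (iso E V)"
      using finV0 iso_sub[of E V] by (intro card_mono) (auto intro: finite_subset)
    then show ?thesis by (simp add: cnt_def)
  qed
  have cV: "card V = card (iso E V) + card V'"
  proof -
    have "card (V - iso E V) = card V - card (iso E V)"
      using finV0 iso_sub[of E V] by (simp add: card_Diff_subset finite_subset)
    moreover have "card (iso E V) \<le> card V" using finV0 iso_sub[of E V] by (simp add: card_mono)
    ultimately show ?thesis by (simp add: V'_def core_def)
  qed
  have IV': "iso E V' = {}" by (simp add: V'_def iso_core)
  have "sc B W E L V' \<le> int (card V')"
  proof (cases "V' = {}")
    case True then show ?thesis by (simp add: sc_empty[OF bip])
  next
    case False
    have key: "card (aft E V' x) < card V \<and> card (V' - aft E V' x) + card (aft E V' x) = card V'" if "x \<in> V'" for x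
    proof -
      have "aft E V' x \<subset> V" using aft_sub[of E V' x] x_notin_aft[OF that] that V'V by blast
      then have "card (aft E V' x) < card V" using finV0 by (simp add: psubset_card_mono)
      moreover have "card (V' - aft E V' x) + card (aft E V' x) = card V'"
        using aft_sub[of E V' x] finV0 V'V
        by (metis card_Diff_subset card_mono diff_add finite_subset)
      ultimately show ?thesis by simp
    qed
    have aS: "aft E V' x \<subseteq> B \<union> W" for x using aft_sub[of E V' x] V'S by blast
    show ?thesis
    proof (cases L)
      case True
      obtain x where x: "x \<in> B \<inter> V'" and eq: "sc B W E True V' = int (card (V' - aft E V' x)) + sc B W E False (aft E V' x)"
        using scT_eq[OF bip V'S IV' False] by blast
      have "sc B W E False (aft E V' x) \<le> int (card (aft E V' x))"
        using less.hyps[OF _ aS] key x by blast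
      then show ?thesis using eq key[of x] x True by simp
    next
      case Fa: False
      obtain x where x: "x \<in> W \<inter> V'" and eq: "sc B W E False V' = - int (card (V' - aft E V' x)) + sc B W E True (aft E V' x)"
        using scF_eq[OF bip V'S IV' False] by blast
      have "sc B W E True (aft E V' x) \<le> int (card (aft E V' x))"
        using less.hyps[OF _ aS] key x by blast
      then show ?thesis using eq key[of x] x Fa by simp
    qed
  qed
  then show ?case using sp c1 cV by simp
qed

lemma max_neg: fixes g :: "'b \<Rightarrow> int"
  assumes "finite S" "S \<noteq> {}" shows "Max ((\<lambda>x. - g x) ` S) = - Min (g ` S)"
proof (rule Max_eqI)
  show "finite ((\<lambda>x. - g x) ` S)" using assms by simp
  show "y \<le> - Min (g ` S)" if "y \<in> (\<lambda>x. - g x) ` S" for y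
    using that assms by auto
  have "Min (g ` S) \<in> g ` S" using assms by (intro Min_in) auto
  then obtain z where "z \<in> S" "g z = Min (g ` S)" by auto
  then show "- Min (g ` S) \<in> (\<lambda>x. - g x) ` S" by force
qed

lemma min_neg: fixes g :: "'b \<Rightarrow> int"
  assumes "finite S" "S \<noteq> {}" shows "Min ((\<lambda>x. - g x) ` S) = - Max (g ` S)"
proof (rule Min_eqI)
  show "finite ((\<lambda>x. - g x) ` S)" using assms by simp
  show "- Max (g ` S) \<le> y" if "y \<in> (\<lambda>x. - g x) ` S" for y
    using that assms by auto
  have "Max (g ` S) \<in> g ` S" using assms by (intro Max_in) auto
  then obtain z where "z \<in> S" "g z = Max (g ` S)" by auto
  then show "- Max (g ` S) \<in> (\<lambda>x. - g x) ` S" by force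
qed

lemma nb_conv[simp]: "nb (E\<inverse>) V v = nb E V v" by (auto simp: nb_def)
lemma iso_conv[simp]: "iso (E\<inverse>) V = iso E V" by (simp add: iso_def)
lemma core_conv[simp]: "core (E\<inverse>) V = core E V" by (simp add: core_def)
lemma nbh_conv[simp]: "nbh (E\<inverse>) V v = nbh E V v" by (simp add: nbh_def)
lemma aft_conv[simp]: "aft (E\<inverse>) V v = aft E V v" by (simp add: aft_def)
lemma bip_conv: "bipartite B W E \<Longrightarrow> bipartite W B (E\<inverse>)"
  by (auto simp: bipartite_def)
lemma cnt_swap: "cnt W B J = - cnt B W J" by (simp add: cnt_def)

lemma sc_sym:
  assumes bip: "bipartite B W E" and VS: "V \<subseteq> B \<union> W"
  shows "sc W B (E\<inverse>) L V = - sc B W E (\<not> L) V"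
  using VS
proof (induction "card V" arbitrary: V L rule: less_induct)
  case less
  have bip': "bipartite W B (E\<inverse>)" by (rule bip_conv[OF bip])
  have VS': "V \<subseteq> W \<union> B" using less.prems by auto
  have finV0: "finite V" using finV[OF bip less.prems] .
  define V' where "V' = core E V"
  have V'V: "V' \<subseteq> V" by (simp add: V'_def core_sub)
  have EC: "(E\<inverse> \<inter> (V \<times> V) = {}) = (E \<inter> (V \<times> V) = {})" by auto
  note u1 = sc_unfold[OF bip less.prems, of "\<not> L", folded V'_def]
  note u2 = sc_unfold[OF bip' VS', of L, unfolded iso_conv core_conv aft_conv, folded V'_def]
  show ?case
  proof (cases "E \<inter> (V \<times> V) = {}")
    case True
    have "sc B W E (\<not> L) V = cnt B W V" using u1 True by (simp only: simp_thms if_True)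
    moreover have "sc W B (E\<inverse>) L V = cnt W B V" using u2 True EC by (simp only: simp_thms if_True)
    ultimately show ?thesis by (simp only: cnt_swap[of W B])
  next
    case False
    then obtain a b where ab: "(a, b) \<in> E" "a \<in> V" "b \<in> V" by auto
    then have "a \<in> V'" "b \<in> V'" by (auto simp: V'_def core_def iso_def nb_def)
    moreover have "a \<in> B" "b \<in> W" using ab bip by (auto simp: bipartite_def)
    ultimately have neB: "B \<inter> V' \<noteq> {}" and neW: "W \<inter> V' \<noteq> {}" by auto
    have fB: "finite (B \<inter> V')" "finite (W \<inter> V')" using finV0 V'V by (auto intro: finite_subset)
    have IH: "sc W B (E\<inverse>) L' (aft E V' x) = - sc B W E (\<not> L') (aft E V' x)" if "x \<in> V'" for x L'
    proof -
      have "aft E V' x \<subset> V" using aft_sub[of E V' x] x_notin_aft[OF that] that V'V by blast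
      then have "card (aft E V' x) < card V" using finV0 by (simp add: psubset_card_mono)
      moreover have "aft E V' x \<subseteq> B \<union> W" using aft_sub[of E V' x] V'V less.prems by blast
      ultimately show ?thesis using less.hyps by blast
    qed
    show ?thesis
    proof (cases L)
      case True
      have "(\<lambda>x. int (card (V' - aft E V' x)) + sc W B (E\<inverse>) False (aft E V' x)) ` (W \<inter> V')
          = (\<lambda>x. - (- int (card (V' - aft E V' x)) + sc B W E True (aft E V' x))) ` (W \<inter> V')"
        by (rule image_cong[OF refl]) (simp add: IH)
      moreover have "sc B W E (\<not> L) V = cnt B W (iso E V) + Min ((\<lambda>y. - int (card (V' - aft E V' y)) + sc B W E True (aft E V' y)) ` (W \<inter> V'))"
        using u1 False True by (simp only: if_False not_True_eq_False)
      moreover have "sc W B (E\<inverse>) L V = cnt W B (iso E V) + Max ((\<lambda>x. int (card (V' - aft E V' x)) + sc W B (E\<inverse>) False (aft E V' x)) ` (W \<inter> V'))"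
        using u2 False True EC by (simp only: if_False if_True)
      moreover have "Max ((\<lambda>x. int (card (V' - aft E V' x)) + sc W B (E\<inverse>) False (aft E V' x)) ` (W \<inter> V'))
          = - Min ((\<lambda>y. - int (card (V' - aft E V' y)) + sc B W E True (aft E V' y)) ` (W \<inter> V'))"
        unfolding calculation(1) by (rule max_neg[OF fB(2) neW, where g="\<lambda>y. - int (card (V' - aft E V' y)) + sc B W E True (aft E V' y)"])
      ultimately show ?thesis by (simp only: cnt_swap[of W B] minus_add_distrib)
    next
      case Fa: False
      have "(\<lambda>x. - int (card (V' - aft E V' x)) + sc W B (E\<inverse>) True (aft E V' x)) ` (B \<inter> V')
          = (\<lambda>x. - (int (card (V' - aft E V' x)) + sc B W E False (aft E V' x))) ` (B \<inter> V')"
        by (rule image_cong[OF refl]) (simp add: IH)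
      moreover have "sc B W E (\<not> L) V = cnt B W (iso E V) + Max ((\<lambda>x. int (card (V' - aft E V' x)) + sc B W E False (aft E V' x)) ` (B \<inter> V'))"
        using u1 False Fa by (simp only: if_False if_True not_False_eq_True)
      moreover have "sc W B (E\<inverse>) L V = cnt W B (iso E V) + Min ((\<lambda>x. - int (card (V' - aft E V' x)) + sc W B (E\<inverse>) True (aft E V' x)) ` (B \<inter> V'))"
        using u2 False Fa EC by (simp only: if_False if_True)
      moreover have "Min ((\<lambda>x. - int (card (V' - aft E V' x)) + sc W B (E\<inverse>) True (aft E V' x)) ` (B \<inter> V'))
          = - Max ((\<lambda>x. int (card (V' - aft E V' x)) + sc B W E False (aft E V' x)) ` (B \<inter> V'))"
        unfolding calculation(1) by (rule min_neg[OF fB(1) neB, where g="\<lambda>x. int (card (V' - aft E V' x)) + sc B W E False (aft E V' x)"])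
      ultimately show ?thesis by (simp only: cnt_swap[of W B] minus_add_distrib)
    qed
  qed
qed

lemma edgeBW: "bipartite B W E \<Longrightarrow> (a, b) \<in> E \<Longrightarrow> a \<in> B \<and> b \<in> W"
  by (auto simp: bipartite_def)

lemma S1:
  assumes x: "x \<in> core E (V - W0)"
  shows "aft E (core E (V - W0)) x = core E (aft E V x - W0)"
proof -
  let ?U = "core E (V - W0)"
  have UV: "?U \<subseteq> V" using core_sub[of E "V - W0"] by blast
  have "?U - nbh E ?U x = ?U - nbh E V x"
    using x UV by (auto simp: nbh_def nb_def)
  then have "aft E ?U x = core E (core E (V - W0) - nbh E V x)" by (simp add: aft_def)
  also have "\<dots> = core E (V - W0 - nbh E V x)" by (rule core_core)
  also have "V - W0 - nbh E V x = V - nbh E V x - W0" by auto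
  also have "core E \<dots> = core E (core E (V - nbh E V x) - W0)" by (rule core_core[symmetric])
  finally show ?thesis by (simp add: aft_def)
qed

lemma S2:
  assumes bip: "bipartite B W E" and VS: "V \<subseteq> B \<union> W" and I: "iso E V = {}" and W0: "W0 \<subseteq> W"
  shows "iso E (V - W0) \<subseteq> B"
proof
  fix v assume v: "v \<in> iso E (V - W0)"
  show "v \<in> B"
  proof (rule ccontr)
    assume "v \<notin> B"
    then have vW: "v \<in> W" using v VS by (auto simp: iso_def)
    have "v \<in> V" using v by (auto simp: iso_def)
    then obtain u where u: "u \<in> nb E V v" using I by (auto simp: iso_def)
    then have "u \<in> B" using vW edgeBW[OF bip] bip by (auto simp: nb_def bipartite_def)
    then have "u \<notin> W0" using W0 bip by (auto simp: bipartite_def)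
    then have "u \<in> nb E (V - W0) v" using u by (auto simp: nb_def)
    then show False using v by (auto simp: iso_def)
  qed
qed

lemma S3:
  assumes x: "x \<in> iso E (V - W0)" and xV: "x \<in> V"
  shows "core E (aft E V x - W0) = core E (V - W0)"
proof -
  have nbx: "nb E V x \<subseteq> W0" using x by (auto simp: iso_def nb_def)
  have "core E (aft E V x - W0) = core E (V - nbh E V x - W0)"
    by (simp add: aft_def core_core)
  also have "V - nbh E V x - W0 = (V - W0) - {x}" using nbx xV by (auto simp: nbh_def)
  also have "core E \<dots> = core E (V - W0)" using x by (intro core_diff) auto
  finally show ?thesis .
qed

lemma S4:
  assumes bip: "bipartite B W E" and VS: "V \<subseteq> B \<union> W" and y: "y \<in> W" "y \<in> V" and W0: "W0 \<subseteq> W"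
  shows "iso E (aft E V y - W0) \<inter> B \<subseteq> iso E (V - W0)"
proof
  fix d assume d: "d \<in> iso E (aft E V y - W0) \<inter> B"
  let ?N = "nbh E V y"
  have dA: "d \<in> aft E V y" "d \<notin> W0" "d \<in> B" using d by (auto simp: iso_def)
  have dV: "d \<in> V - ?N" using dA(1) by (auto simp: aft_def core_def iso_def)
  have "u \<notin> nb E (V - W0) d" for u
  proof
    assume u: "u \<in> nb E (V - W0) d"
    then have uV: "u \<in> V" "u \<notin> W0" and e: "(d, u) \<in> E \<or> (u, d) \<in> E" by (auto simp: nb_def)
    have uW: "u \<in> W" using e dA(3) edgeBW[OF bip] bip by (auto simp: bipartite_def)
    have "u \<notin> ?N"
    proof
      assume "u \<in> ?N"
      then have "u = y \<or> u \<in> nb E V y" by (auto simp: nbh_def)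
      then show False
      proof
        assume "u = y"
        then have "d \<in> nb E V y" using e dV by (auto simp: nb_def)
        then show False using dV by (auto simp: nbh_def)
      next
        assume "u \<in> nb E V y"
        then have "u \<in> B" using y edgeBW[OF bip] bip by (auto simp: nb_def bipartite_def)
        then show False using uW bip by (auto simp: bipartite_def)
      qed
    qed
    then have "u \<in> V - ?N" using uV by auto
    moreover have "d \<in> nb E (V - ?N) u" using dV e \<open>u \<in> V - ?N\<close> by (auto simp: nb_def)
    ultimately have "u \<in> aft E V y" by (auto simp: aft_def core_def iso_def)
    then have "u \<in> nb E (aft E V y - W0) d" using uV e by (auto simp: nb_def)
    then show False using d by (auto simp: iso_def)
  qed
  then show "d \<in> iso E (V - W0)" using dV dA by (auto simp: iso_def)
qed

lemma S5:
  assumes bip: "bipartite B W E" and VS: "V \<subseteq> B \<union> W" and y: "y \<in> W" "y \<in> V"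
  shows "(V - aft E V y) \<inter> W \<subseteq> iso E (V - ((V - aft E V y) \<inter> B))"
proof
  fix u assume u: "u \<in> (V - aft E V y) \<inter> W"
  let ?N = "nbh E V y"
  have uV: "u \<in> V" "u \<in> W" using u by auto
  have "v \<notin> nb E (V - ((V - aft E V y) \<inter> B)) u" for v
  proof
    assume v: "v \<in> nb E (V - ((V - aft E V y) \<inter> B)) u"
    then have e: "(u, v) \<in> E \<or> (v, u) \<in> E" and vV: "v \<in> V" by (auto simp: nb_def)
    have vB: "v \<in> B" using e uV edgeBW[OF bip] bip by (auto simp: bipartite_def)
    then have vA: "v \<in> aft E V y" using v vV by (auto simp: nb_def)
    then have vN: "v \<in> V - ?N" and vni: "v \<notin> iso E (V - ?N)" by (auto simp: aft_def core_def)
    have "u \<in> ?N \<or> u \<in> iso E (V - ?N)" using u by (auto simp: aft_def core_def)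
    then show False
    proof
      assume "u \<in> ?N"
      then have "u = y \<or> u \<in> nb E V y" by (auto simp: nbh_def)
      then show False
      proof
        assume "u = y"
        then have "v \<in> nb E V y" using e vV by (auto simp: nb_def)
        then show False using vN by (auto simp: nbh_def)
      next
        assume "u \<in> nb E V y"
        then have "u \<in> B" using y edgeBW[OF bip] bip by (auto simp: nb_def bipartite_def)
        then show False using uV bip by (auto simp: bipartite_def)
      qed
    next
      assume "u \<in> iso E (V - ?N)"
      moreover have "v \<in> nb E (V - ?N) u" using e vN \<open>u \<in> iso E (V - ?N)\<close> by (auto simp: nb_def iso_def)
      ultimately show False by (auto simp: iso_def)
    qed
  qed
  moreover have "u \<in> V - ((V - aft E V y) \<inter> B)" using uV bip by (auto simp: bipartite_def)
  ultimately show "u \<in> iso E (V - ((V - aft E V y) \<inter> B))" by (auto simp: iso_def)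
qed

lemma card_diff_int: "finite V \<Longrightarrow> A \<subseteq> V \<Longrightarrow> int (card (V - A)) = int (card V) - int (card A)"
  by (simp add: card_Diff_subset card_mono of_nat_diff finite_subset)

lemma card3:
  assumes "finite X"
  shows "int (card X) = int (card (W0 \<inter> X)) + int (card (iso E (X - W0))) + int (card (core E (X - W0)))"
proof -
  have "int (card X) = int (card (W0 \<inter> X)) + int (card (X - W0))"
  proof -
    have "X = (W0 \<inter> X) \<union> (X - W0)" by auto
    then have "card X = card ((W0 \<inter> X) \<union> (X - W0))" by simp
    also have "\<dots> = card (W0 \<inter> X) + card (X - W0)" using assms by (intro card_Un_disjoint) auto
    finally show ?thesis by simp
  qed
  moreover have "int (card (core E (X - W0))) = int (card (X - W0)) - int (card (iso E (X - W0)))"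
    unfolding core_def using assms by (intro card_diff_int) (auto simp: iso_sub)
  ultimately show ?thesis by simp
qed

lemma cnt_B: "bipartite B W E \<Longrightarrow> J \<subseteq> B \<Longrightarrow> cnt B W J = int (card J)"
  by (auto simp: cnt_def bipartite_def Int_absorb1 intro!: arg_cong[where f=card])

lemma cnt_le: assumes "finite J" shows "cnt B W J \<le> int (card J)"
proof -
  have "card (B \<inter> J) \<le> card J" using assms by (intro card_mono) auto
  then show ?thesis unfolding cnt_def by simp
qed

lemma LR:
  assumes bip: "bipartite B W E" and VS: "U \<subseteq> B \<union> W" and I: "iso E U = {}"
    and c: "\<And>B0. B0 \<subseteq> B \<Longrightarrow> sc B W E True (U - B0) - int (card (B0 \<inter> U)) \<le> sc B W E True U"
  shows "sc B W E False U \<le> sc B W E True U"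
proof (cases "U = {}")
  case True then show ?thesis by (simp add: sc_empty[OF bip])
next
  case False
  then obtain y where y: "y \<in> W" "y \<in> U" using noiso_edge[OF bip VS I] by auto
  define A where "A = aft E U y"
  define R where "R = U - A"
  have finU: "finite U" by (rule finV[OF bip VS])
  have AU: "A \<subseteq> U" by (simp add: A_def aft_sub)
  have RS: "R \<subseteq> B \<union> W" "R \<subseteq> U" using VS by (auto simp: R_def)
  have f1: "sc B W E False U \<le> - int (card R) + sc B W E True A"
    using scF_le[OF bip VS I, of y] y by (simp add: A_def R_def)
  have isoW: "R \<inter> W \<subseteq> iso E (U - R \<inter> B)" using S5[OF bip VS y] by (simp add: R_def A_def)
  have eqA: "U - R \<inter> B - R \<inter> W = A" using RS AU by (auto simp: R_def)
  have s: "sc B W E True (U - R \<inter> B) = cnt B W (R \<inter> W) + sc B W E True A"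
    using sc_split[OF bip _ isoW, of True] VS eqA by auto
  have cW: "cnt B W (R \<inter> W) = - int (card (R \<inter> W))"
    using bip by (auto simp: cnt_def bipartite_def Int_absorb1 intro!: arg_cong[where f=card])
  have cR: "int (card R) = int (card (R \<inter> B)) + int (card (R \<inter> W))"
  proof -
    have "R = (R \<inter> B) \<union> (R \<inter> W)" using RS by auto
    moreover have "finite R" using finU RS by (auto intro: finite_subset)
    moreover have "(R \<inter> B) \<inter> (R \<inter> W) = {}" using bip by (auto simp: bipartite_def)
    ultimately have "card R = card (R \<inter> B) + card (R \<inter> W)"
      by (metis card_Un_disjoint finite_Int)
    then show ?thesis by simp
  qed
  have "R \<inter> B \<inter> U = R \<inter> B" using RS by auto
  then have "sc B W E True (U - R \<inter> B) - int (card (R \<inter> B)) \<le> sc B W E True U"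
    using c[of "R \<inter> B"] by (simp add: Int_commute)
  then show ?thesis using f1 s cW cR by linarith
qed

lemma main:
  assumes "bipartite B W E" "V \<subseteq> B \<union> W" "iso E V = {}"
  shows "(\<forall>W0. W0 \<subseteq> W \<longrightarrow> sc B W E True V \<le> sc B W E True (V - W0) + int (card (W0 \<inter> V))) \<and>
         (\<forall>W0. W0 \<subseteq> W \<longrightarrow> sc B W E False V \<le> sc B W E False (V - W0) + int (card (W0 \<inter> V)))"
  using assms
proof (induction "card V" arbitrary: B W E V rule: less_induct)
  case less
  note bip = less.prems(1) and VS = less.prems(2) and I = less.prems(3)
  have finV0: "finite V" by (rule finV[OF bip VS])
  have IHA: "sc B W E True U \<le> sc B W E True (U - W0) + int (card (W0 \<inter> U))"
    if "U \<subseteq> B \<union> W" "iso E U = {}" "card U < card V" "W0 \<subseteq> W" for U W0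
    using less.hyps[OF that(3) bip that(1,2)] that(4) by blast
  have IHB: "sc B W E False U \<le> sc B W E False (U - W0) + int (card (W0 \<inter> U))"
    if "U \<subseteq> B \<union> W" "iso E U = {}" "card U < card V" "W0 \<subseteq> W" for U W0
    using less.hyps[OF that(3) bip that(1,2)] that(4) by blast
  have IHC: "sc B W E True (U - B0) - int (card (B0 \<inter> U)) \<le> sc B W E True U"
    if "U \<subseteq> B \<union> W" "iso E U = {}" "card U < card V" "B0 \<subseteq> B" for U B0
  proof -
    have "U \<subseteq> W \<union> B" "iso (E\<inverse>) U = {}" using that by auto
    then have "sc W B (E\<inverse>) False U \<le> sc W B (E\<inverse>) False (U - B0) + int (card (B0 \<inter> U))"
      using less.hyps[OF that(3) bip_conv[OF bip]] that(4) by blast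
    moreover have "sc W B (E\<inverse>) False U = - sc B W E True U" using sc_sym[OF bip that(1)] by simp
    moreover have "sc W B (E\<inverse>) False (U - B0) = - sc B W E True (U - B0)"
      using sc_sym[OF bip, of "U - B0" False] that(1) by auto
    ultimately show ?thesis by linarith
  qed
  have LRs: "sc B W E False U \<le> sc B W E True U"
    if "U \<subseteq> B \<union> W" "iso E U = {}" "card U < card V" for U
    using LR[OF bip that(1,2)] IHC[OF that] by blast
  have conjA: "sc B W E True V \<le> sc B W E True (V - W0) + int (card (W0 \<inter> V))"
   and conjB: "sc B W E False V \<le> sc B W E False (V - W0) + int (card (W0 \<inter> V))"
    if W0: "W0 \<subseteq> W" for W0
  proof -
    define V1 where "V1 = V - W0"
    define D0 where "D0 = iso E V1"
    define V2 where "V2 = core E V1"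
    have V1S: "V1 \<subseteq> B \<union> W" using VS by (auto simp: V1_def)
    have D0B: "D0 \<subseteq> B" unfolding D0_def V1_def by (rule S2[OF bip VS I W0])
    have V2V: "V2 \<subseteq> V" using core_sub[of E V1] by (auto simp: V2_def V1_def)
    have V2S: "V2 \<subseteq> B \<union> W" using V2V VS by auto
    have I2: "iso E V2 = {}" by (simp add: V2_def iso_core)
    have finD0: "finite D0" using finV0 iso_sub[of E V1] by (auto simp: D0_def V1_def intro: finite_subset)
    have spl1: "sc B W E L V1 = int (card D0) + sc B W E L V2" for L
      using sc_split[OF bip V1S, of D0 L] cnt_B[OF bip D0B] by (simp add: D0_def V2_def core_def)
    have cV: "int (card V) = int (card (W0 \<inter> V)) + int (card D0) + int (card V2)"
      using card3[OF finV0, of W0 E] by (simp add: D0_def V2_def V1_def)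
    show "sc B W E True V \<le> sc B W E True (V - W0) + int (card (W0 \<inter> V))"
    proof (cases "V = {}")
      case True then show ?thesis by (simp add: sc_empty[OF bip])
    next
      case False
      obtain x where x: "x \<in> B \<inter> V" and eq: "sc B W E True V = int (card (V - aft E V x)) + sc B W E False (aft E V x)"
        using scT_eq[OF bip VS I False] by blast
      define A where "A = aft E V x"
      have AV: "A \<subseteq> V" by (simp add: A_def aft_sub)
      have AS: "A \<subseteq> B \<union> W" using AV VS by auto
      have IA: "iso E A = {}" by (simp add: A_def aft_def iso_core)
      have cA: "card A < card V" using AV x x_notin_aft[of x V E] finV0
        by (metis A_def IntD2 psubsetI psubset_card_mono)
      have finA: "finite A" using finV0 AV by (auto intro: finite_subset)
      define D where "D = iso E (A - W0)"
      define A2 where "A2 = core E (A - W0)"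
      have A1S: "A - W0 \<subseteq> B \<union> W" using AS by auto
      have finD: "finite D" using finA iso_sub[of E "A - W0"] by (auto simp: D_def intro: finite_subset)
      have splA: "sc B W E False (A - W0) = cnt B W D + sc B W E False A2"
        using sc_split[OF bip A1S, of D False] by (simp add: D_def A2_def core_def)
      have cAA: "int (card A) = int (card (W0 \<inter> A)) + int (card D) + int (card A2)"
        using card3[OF finA, of W0 E] by (simp add: D_def A2_def)
      have hB: "sc B W E False A \<le> sc B W E False (A - W0) + int (card (W0 \<inter> A))"
        by (rule IHB[OF AS IA cA W0])
      have cD: "cnt B W D \<le> int (card D)" by (rule cnt_le[OF finD])
      have cVA: "int (card (V - A)) = int (card V) - int (card A)" by (rule card_diff_int[OF finV0 AV])
      have tgt: "sc B W E True V1 = int (card D0) + sc B W E True V2" by (rule spl1)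
      show ?thesis
      proof (cases "x \<in> V2")
        case True
        have A2eq: "aft E V2 x = A2" using S1[of x E V W0] True by (simp add: V2_def V1_def A_def A2_def)
        have "int (card (V2 - aft E V2 x)) + sc B W E False (aft E V2 x) \<le> sc B W E True V2"
          using scT_ge[OF bip V2S I2] True x by blast
        moreover have "int (card (V2 - A2)) = int (card V2) - int (card A2)"
          using finV0 V2V A2eq aft_sub[of E V2 x] by (intro card_diff_int) (auto intro: finite_subset)
        ultimately have "int (card V2) - int (card A2) + sc B W E False A2 \<le> sc B W E True V2"
          using A2eq by simp
        then show ?thesis using eq hB splA cD cVA tgt cV cAA
          unfolding A_def[symmetric] V1_def[symmetric] by linarith
      next
        case False
        have xD0: "x \<in> D0" using x False W0 bip
          by (auto simp: D0_def V2_def V1_def core_def bipartite_def)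
        have A2eq: "A2 = V2" using S3[of x E V W0] xD0 x by (simp add: D0_def V1_def A_def A2_def V2_def)
        have "card V2 < card V" using V2V False x finV0 by (metis IntD2 psubsetI psubset_card_mono)
        then have "sc B W E False V2 \<le> sc B W E True V2" using LRs[OF V2S I2] by blast
        moreover note splA' = splA[unfolded A2eq] and cAA' = cAA[unfolded A2eq]
        ultimately show ?thesis using eq hB cD cVA tgt cV
          unfolding A_def[symmetric] V1_def[symmetric] by linarith
      qed
    qed
    show "sc B W E False V \<le> sc B W E False (V - W0) + int (card (W0 \<inter> V))"
    proof (cases "V2 = {}")
      case True
      have "sc B W E False V \<le> int (card V)" by (rule sc_le_card[OF bip VS])
      moreover have "sc B W E False V1 = int (card D0)" using spl1[of False] True by (simp add: sc_empty[OF bip])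
      ultimately show ?thesis using cV True by (simp add: V1_def)
    next
      case False
      obtain y where y: "y \<in> W \<inter> V2" and eq2: "sc B W E False V2 = - int (card (V2 - aft E V2 y)) + sc B W E True (aft E V2 y)"
        using scF_eq[OF bip V2S I2 False] by blast
      have yV: "y \<in> V" "y \<in> W" using y V2V by auto
      define A where "A = aft E V y"
      have AV: "A \<subseteq> V" by (simp add: A_def aft_sub)
      have AS: "A \<subseteq> B \<union> W" using AV VS by auto
      have IA: "iso E A = {}" by (simp add: A_def aft_def iso_core)
      have cA: "card A < card V" using AV yV x_notin_aft[of y V E] finV0
        by (metis A_def psubsetI psubset_card_mono)
      have finA: "finite A" using finV0 AV by (auto intro: finite_subset)
      define D where "D = iso E (A - W0)"
      define A2 where "A2 = core E (A - W0)"
      have A1S: "A - W0 \<subseteq> B \<union> W" using AS by auto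
      have finD: "finite D" using finA iso_sub[of E "A - W0"] by (auto simp: D_def intro: finite_subset)
      have DB: "D \<subseteq> B" unfolding D_def by (rule S2[OF bip AS IA W0])
      have DD0: "D \<subseteq> D0" using S4[OF bip VS yV(2) yV(1) W0] DB by (auto simp: D_def A_def D0_def V1_def)
      have cDD: "card D \<le> card D0" by (rule card_mono[OF finD0 DD0])
      have splA: "sc B W E True (A - W0) = int (card D) + sc B W E True A2"
        using sc_split[OF bip A1S, of D True] cnt_B[OF bip DB] by (simp add: D_def A2_def core_def)
      have cAA: "int (card A) = int (card (W0 \<inter> A)) + int (card D) + int (card A2)"
        using card3[OF finA, of W0 E] by (simp add: D_def A2_def)
      have cWA: "card (W0 \<inter> A) \<le> card (W0 \<inter> V)" using finV0 AV by (intro card_mono) auto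
      have hA: "sc B W E True A \<le> sc B W E True (A - W0) + int (card (W0 \<inter> A))"
        by (rule IHA[OF AS IA cA W0])
      have f1: "sc B W E False V \<le> - int (card (V - A)) + sc B W E True A"
        using scF_le[OF bip VS I, of y] yV by (simp add: A_def)
      have cVA: "int (card (V - A)) = int (card V) - int (card A)" by (rule card_diff_int[OF finV0 AV])
      have A2eq: "aft E V2 y = A2" using S1[of y E V W0] y by (simp add: V2_def V1_def A_def A2_def)
      have "int (card (V2 - A2)) = int (card V2) - int (card A2)"
        using finV0 V2V A2eq aft_sub[of E V2 y] by (intro card_diff_int) (auto intro: finite_subset)
      then have eq3: "sc B W E False V2 = - (int (card V2) - int (card A2)) + sc B W E True A2"
        using eq2 A2eq by simp
      have tgt: "sc B W E False V1 = int (card D0) + sc B W E False V2" by (rule spl1)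
      show ?thesis using f1 hA splA cAA cWA cDD cVA eq3 tgt cV
        unfolding V1_def[symmetric] by linarith
    qed
  qed
  show ?case using conjA conjB by blast
qed

lemma white_all:
  assumes bip: "bipartite B W E" and VS: "V \<subseteq> B \<union> W" and W0: "W0 \<subseteq> W"
  shows "sc B W E L V \<le> sc B W E L (V - W0) + int (card (W0 \<inter> V))"
proof -
  define J where "J = iso E V"
  define C where "C = core E V"
  define J' where "J' = J - W0"
  have finV0: "finite V" by (rule finV[OF bip VS])
  have CV: "C \<subseteq> V" by (simp add: C_def core_sub)
  have CS: "C \<subseteq> B \<union> W" using CV VS by auto
  have IC: "iso E C = {}" by (simp add: C_def iso_core)
  have H: "sc B W E L C \<le> sc B W E L (C - W0) + int (card (W0 \<inter> C))"
    using main[OF bip CS IC] W0 by (cases L) auto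
  have s1: "sc B W E L V = cnt B W J + sc B W E L C"
    using sc_split[OF bip VS, of J L] by (simp add: J_def C_def core_def)
  have J'iso: "J' \<subseteq> iso E (V - W0)" using iso_mono[of E V W0] by (simp add: J'_def J_def)
  have V1S: "V - W0 \<subseteq> B \<union> W" using VS by auto
  have eqC: "V - W0 - J' = C - W0" by (auto simp: J'_def C_def J_def core_def)
  have s2: "sc B W E L (V - W0) = cnt B W J' + sc B W E L (C - W0)"
    using sc_split[OF bip V1S J'iso, of L] eqC by simp
  have s3: "cnt B W J = cnt B W J' + cnt B W (J - J')"
    by (rule cnt_split[OF bip]) (auto simp: J'_def)
  have s4: "cnt B W (J - J') \<le> 0"
  proof -
    have "B \<inter> (J - J') = {}" using W0 bip by (auto simp: J'_def bipartite_def)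
    then show ?thesis by (simp add: cnt_def)
  qed
  have s5: "card (W0 \<inter> C) \<le> card (W0 \<inter> V)" using finV0 CV by (intro card_mono) auto
  show ?thesis using H s1 s2 s3 s4 s5 by linarith
qed

lemma black_all:
  assumes bip: "bipartite B W E" and VS: "V \<subseteq> B \<union> W" and B0: "B0 \<subseteq> B"
  shows "sc B W E L (V - B0) - int (card (B0 \<inter> V)) \<le> sc B W E L V"
proof -
  have VS': "V \<subseteq> W \<union> B" using VS by auto
  have "sc W B (E\<inverse>) (\<not> L) V \<le> sc W B (E\<inverse>) (\<not> L) (V - B0) + int (card (B0 \<inter> V))"
    by (rule white_all[OF bip_conv[OF bip] VS' B0])
  moreover have "sc W B (E\<inverse>) (\<not> L) V = - sc B W E L V" using sc_sym[OF bip VS, of "\<not> L"] by simp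
  moreover have "sc W B (E\<inverse>) (\<not> L) (V - B0) = - sc B W E L (V - B0)"
    using sc_sym[OF bip, of "V - B0" "\<not> L"] VS by auto
  ultimately show ?thesis by linarith
qed

lemma del_sc:
  assumes bip: "bipartite B W E"
  shows "(case del B W E X of (B1, W1, E1) \<Rightarrow> score L B1 W1 E1) = sc B W E L (B \<union> W - X)"
proof -
  have EBW: "E \<subseteq> B \<times> W" using bip by (auto simp: bipartite_def)
  have "B \<inter> (B \<union> W - X) = B - X" "W \<inter> (B \<union> W - X) = W - X" by auto
  moreover have "E \<inter> ((B \<union> W - X) \<times> (B \<union> W - X)) = E \<inter> ((B - X) \<times> (W - X))" using EBW by auto
  ultimately show ?thesis by (simp add: del_def sc_def)
qed

lemma full_sc:
  assumes bip: "bipartite B W E"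
  shows "score L B W E = sc B W E L (B \<union> W)"
proof -
  have EBW: "E \<subseteq> B \<times> W" using bip by (auto simp: bipartite_def)
  have "B \<inter> (B \<union> W) = B" "W \<inter> (B \<union> W) = W" by auto
  moreover have "E \<inter> ((B \<union> W) \<times> (B \<union> W)) = E" using EBW by auto
  ultimately show ?thesis by (simp add: sc_def)
qed

theorem mainTheorem7:
  fixes B W B0 W0 :: "'a set" and E :: "('a \<times> 'a) set"
  assumes "bipartite B W E" and "B0 \<subseteq> B" and "W0 \<subseteq> W"
  shows "(Ls B W E \<le> (case del B W E W0 of (B1, W1, E1) \<Rightarrow> Ls B1 W1 E1) + int (card W0)) \<and>
         (Rs B W E \<ge> (case del B W E B0 of (B1, W1, E1) \<Rightarrow> Rs B1 W1 E1) - int (card B0)) \<and>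
         (Ls B W E \<ge> (case del B W E B0 of (B1, W1, E1) \<Rightarrow> Ls B1 W1 E1) - int (card B0)) \<and>
         (Rs B W E \<le> (case del B W E W0 of (B1, W1, E1) \<Rightarrow> Rs B1 W1 E1) + int (card W0))"
proof -
  note bip = assms(1)
  have VS: "B \<union> W \<subseteq> B \<union> W" by simp
  have fin: "finite B" "finite W" using bip by (auto simp: bipartite_def)
  have cW: "card (W0 \<inter> (B \<union> W)) \<le> card W0" using fin assms(3) by (intro card_mono) (auto intro: finite_subset)
  have cB: "card (B0 \<inter> (B \<union> W)) \<le> card B0" using fin assms(2) by (intro card_mono) (auto intro: finite_subset)
  have LsD: "(case del B W E X of (B1, W1, E1) \<Rightarrow> Ls B1 W1 E1) = sc B W E True (B \<union> W - X)" for X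
    using del_sc[OF bip, where X=X and L=True] by (simp add: Ls_def[abs_def])
  have RsD: "(case del B W E X of (B1, W1, E1) \<Rightarrow> Rs B1 W1 E1) = sc B W E False (B \<union> W - X)" for X
    using del_sc[OF bip, where X=X and L=False] by (simp add: Rs_def[abs_def])
  have Ls: "Ls B W E = sc B W E True (B \<union> W)" by (simp add: Ls_def full_sc[OF bip])
  have Rs: "Rs B W E = sc B W E False (B \<union> W)" by (simp add: Rs_def full_sc[OF bip])
  have 1: "sc B W E True (B \<union> W) \<le> sc B W E True (B \<union> W - W0) + int (card (W0 \<inter> (B \<union> W)))"
    by (rule white_all[OF bip VS assms(3)])
  have 2: "sc B W E False (B \<union> W) \<le> sc B W E False (B \<union> W - W0) + int (card (W0 \<inter> (B \<union> W)))"
    by (rule white_all[OF bip VS assms(3)])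
  have 3: "sc B W E True (B \<union> W - B0) - int (card (B0 \<inter> (B \<union> W))) \<le> sc B W E True (B \<union> W)"
    by (rule black_all[OF bip VS assms(2)])
  have 4: "sc B W E False (B \<union> W - B0) - int (card (B0 \<inter> (B \<union> W))) \<le> sc B W E False (B \<union> W)"
    by (rule black_all[OF bip VS assms(2)])
  show ?thesis unfolding LsD RsD Ls Rs using 1 2 3 4 cW cB by linarith
qed

end
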